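(* Let $\mathcal A\subset\mathbb R^n$ be compact with diameter $D_{\mathcal A}<\infty$, let $\mathcal X=\mathrm{conv}(\mathcal A)$ or $\mathcal X=\mathrm{lin}(\mathcal A)$, and let $f$ be differentiable with $L$-Lipschitz gradient. Let $\{x_t\}_{t\ge0}$ be generated by the AC-FW algorithm described in the context, and assume Conditions (D) and (S) hold. Fix $\eta>1$. Then for every $t\ge0$: (i) $f(x_{t+1})\le f(\bar x_{t+1})\le f(x_t)-\gamma_t\nabla f(x_t)^\top d_t+\frac{L_{t+1}}{2}\gamma_t^2\|d_t\|_2^2$; (ii) if $t\in\mathcal I_\eta$, then $f(x_{t+1})\le f(x_t)-\left(1-\frac{\eta}{2}\right)\gamma_t\nabla f(x_t)^\top d_t$; (iii) if $t\in\mathcal G\cap\mathcal I_\eta$, then $f(x_{t+1})\le f(x_t)-\left(1-\frac{\eta}{2}\right)\min\left\{1,\frac{\nabla f(x_t)^\top d_t}{L_t\|d_t\|_2^2}\right\}\nabla f(x_t)^\top d_t$; (iv) if in addition $f$ is convex and $\mathcal X=\mathrm{conv}(\mathcal A)$, then $\nabla f(x_t)^\top(x_t-v_t)\ge f(x_t)-f(x^\star)$.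
   Context: $D_{\mathcal A}:=\sup_{x,y\in\mathcal A}\|x-y\|_2$. $f:\mathbb R^n\to\mathbb R$ satisfies $\|\nabla f(x)-\nabla f(y)\|_2\le L\|x-y\|_2$ for all $x,y$. $x^\star$ denotes an optimal solution of $\min_{x\in\mathcal X}f(x)$. For $x\neq y$ let $\ell(x,y):=2|f(y)-f(x)-\nabla f(x)^\top(y-x)|/\|y-x\|_2^2$, and $\ell(x,x):=0$. AC-FW algorithm: given a damping sequence $\{r_t\}_{t\ge0}$ and a direction-finding subroutine, pick $x_{-1}\in\mathcal A$, $x_0\in\arg\min_{v\in\mathcal A}\nabla f(x_{-1})^\top v$, $L_0:=\ell(x_{-1},x_0)$. For $t=0,1,2,\dots$: choose $v_t\in\arg\min_{v\in\mathcal A}\nabla f(x_t)^\top v$; the subroutine returns $d_t\in\mathbb R^n$ and $\gamma_t^{\max}\in(0,\infty]$; set $\gamma_t:=\min\{\nabla f(x_t)^\top d_t/(L_t\|d_t\|_2^2),\gamma_t^{\max}\}$, $\bar x_{t+1}:=x_t-\gamma_t d_t$, $L_{t+1}:=\max\{\ell(x_t,\bar x_{t+1}),r_tL_t\}$, and $x_{t+1}:=\bar x_{t+1}$ if $f(\bar x_{t+1})<f(x_t)$, else $x_{t+1}:=x_t$. For $\eta>1$: $\mathcal I_\eta:=\{t\ge0:L_{t+1}\le\eta L_t\}$; $\mathcal G:=\{t\ge0:\gamma_t^{\max}\ge1\text{ or }\gamma_t<\gamma_t^{\max}\}$. Condition (D): $r_t\in(0,1]$ for all $t$ and $\prod_{t\ge0}r_t\in(0,1]$.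 Condition (S): for every $t\ge0$: (i) $\|d_t\|_2\le D_{\mathcal A}$ and $x_t-\gamma d_t\in\mathcal X$ for every (finite) $\gamma\in[0,\gamma_t^{\max}]$; (ii) $\mathcal G$ is infinite; (iii) if $f$ is convex, there is a constant $R\ge1$ independent of $t$ with $\nabla f(x_t)^\top d_t\ge (f(x_t)-f(x^\star))/R$. *)

theory Defs
  imports "HOL-Analysis.Analysis" "HOL-Library.Extended_Real"
begin

definition ell :: "('a::euclidean_space \<Rightarrow> real) \<Rightarrow> ('a \<Rightarrow> 'a) \<Rightarrow> 'a \<Rightarrow> 'a \<Rightarrow> real" where
  "ell f grad x y = (if x = y then 0
     else 2 * \<bar>f y - f x - grad x \<bullet> (y - x)\<bar> / (norm (y - x))\<^sup>2)"

end

theory Submission imports Defs begin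
lemma grad_ineq:
  fixes f :: "'a::euclidean_space \<Rightarrow> real"
  assumes cv: "convex_on UNIV f" and der: "(f has_derivative (\<lambda>h. g \<bullet> h)) (at x)"
  shows "f y \<ge> f x + g \<bullet> (y - x)"
proof -
  define h where "h = (\<lambda>s::real. f (x + s *\<^sub>R (y - x)))"
  have ch: "convex_on UNIV h"
    unfolding h_def convex_on_def
  proof (intro conjI convex_UNIV allI impI ballI)
    fix s t u v :: real assume uv: "0 \<le> u" "0 \<le> v" "u + v = 1"
    have "x + (u * s + v * t) *\<^sub>R (y - x) = u *\<^sub>R (x + s *\<^sub>R (y - x)) + v *\<^sub>R (x + t *\<^sub>R (y - x))"
      using uv by (simp add: algebra_simps flip: scaleR_add_left)
    then show "f (x + (u *\<^sub>R s + v *\<^sub>R t) *\<^sub>R (y - x)) \<le> u * f (x + s *\<^sub>R (y - x)) + v * f (x + t *\<^sub>R (y - x))"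
      using cv uv unfolding convex_on_def by auto
  qed
  have d1: "((\<lambda>s::real. x + s *\<^sub>R (y - x)) has_derivative (\<lambda>s. s *\<^sub>R (y - x))) (at 0)"
    by (auto intro!: derivative_eq_intros)
  have "(h has_derivative (\<lambda>s. g \<bullet> (s *\<^sub>R (y - x)))) (at 0)"
  proof -
    have der': "(f has_derivative (\<lambda>h. g \<bullet> h)) (at (x + (0::real) *\<^sub>R (y - x)))" using der by simp
    show ?thesis unfolding h_def using has_derivative_compose[OF d1 der'] by simp
  qed
  hence "(h has_field_derivative (g \<bullet> (y - x))) (at 0)"
  proof -
    assume a: "(h has_derivative (\<lambda>s. g \<bullet> (s *\<^sub>R (y - x)))) (at 0)"
    have "(\<lambda>s. g \<bullet> (s *\<^sub>R (y - x))) = (*) (g \<bullet> (y - x))" by (auto simp: fun_eq_iff)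
    with a show ?thesis unfolding has_field_derivative_def by simp
  qed
  hence "h 1 - h 0 \<ge> (g \<bullet> (y - x)) * (1 - 0)"
    by (intro convex_on_imp_above_tangent[OF ch]) auto
  thus ?thesis by (simp add: h_def)
qed
lemma ell_nonneg: "ell f grad a b \<ge> 0"
  unfolding ell_def by auto

lemma ell_bound:
  fixes f :: "'a::euclidean_space \<Rightarrow> real"
  assumes "b = a - c *\<^sub>R d"
  shows "f b - f a + c * (grad a \<bullet> d) \<le> ell f grad a b / 2 * c\<^sup>2 * (norm d)\<^sup>2"
proof (cases "a = b")
  case True
  then have "c *\<^sub>R d = 0" using assms by simp
  then have "c = 0 \<or> d = 0" by simp
  then show ?thesis using True by (auto simp: ell_def)
next
  case False
  have e: "b - a = - (c *\<^sub>R d)" using assms by simp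
  have n: "(norm (b - a))\<^sup>2 = c\<^sup>2 * (norm d)\<^sup>2" unfolding e by (simp add: power_mult_distrib)
  have pos: "(norm (b - a))\<^sup>2 > 0" using False by simp
  have "ell f grad a b / 2 * c\<^sup>2 * (norm d)\<^sup>2 = \<bar>f b - f a - grad a \<bullet> (b - a)\<bar>"
  proof -
    have "ell f grad a b / 2 * c\<^sup>2 * (norm d)\<^sup>2 = ell f grad a b / 2 * (norm (b - a))\<^sup>2"
      by (simp add: n mult.assoc)
    also have "\<dots> = \<bar>f b - f a - grad a \<bullet> (b - a)\<bar>" using False pos unfolding ell_def by simp
    finally show ?thesis .
  qed
  also have "grad a \<bullet> (b - a) = - c * (grad a \<bullet> d)" unfolding e by simp
  finally show ?thesis by simp
qed

lemma gam_bound: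
  fixes K g gm :: real and gmx :: ereal
  assumes K: "K \<ge> 0" and gp: "gmx > 0" and gm: "ereal gm = min (ereal (g / K)) gmx"
  shows "K * gm\<^sup>2 \<le> gm * g"
proof (cases "K = 0")
  case True
  then have "ereal gm = min 0 gmx" using gm by (simp add: zero_ereal_def)
  then have "gm = 0" using gp by (auto simp: min_def split: if_splits simp: zero_ereal_def)
  then show ?thesis by simp
next
  case False
  then have Kp: "K > 0" using K by simp
  show ?thesis
  proof (cases "ereal (g / K) \<le> gmx")
    case True
    then have "gm = g / K" using gm by (simp add: min_def)
    then have "K * gm = g" using Kp by simp
    have "K * gm\<^sup>2 = (K * gm) * gm" by (simp add: power2_eq_square)
    then show ?thesis using \<open>K * gm = g\<close> by simp
  next
    case f2: False
    then have "ereal gm = gmx" using gm by (simp add: min_def)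
    then have "gm > 0" "gm \<le> g / K" using gp f2 by auto
    then have "K * gm \<le> g" using Kp by (simp add: field_simps)
    then have "gm * (K * gm) \<le> gm * g" using \<open>gm > 0\<close> by (intro mult_left_mono) auto
    then show ?thesis by (simp add: power2_eq_square algebra_simps)
  qed
qed
theorem lemma4:
  fixes A X :: "'a::euclidean_space set"
    and f :: "'a \<Rightarrow> real" and grad :: "'a \<Rightarrow> 'a" and Lf :: real
    and xm1 :: 'a and x xb v d :: "nat \<Rightarrow> 'a"
    and gmax :: "nat \<Rightarrow> ereal" and gam Lt r :: "nat \<Rightarrow> real"
    and eta :: real
  assumes A: "compact A" "A \<noteq> {}"
    and X: "X = convex hull A \<or> X = span A"
    and deriv: "\<And>y. (f has_derivative (\<lambda>h. grad y \<bullet> h)) (at y)"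
    and lip: "\<And>y z. norm (grad y - grad z) \<le> Lf * norm (y - z)"
    \<comment> \<open>initialisation\<close>
    and init_xm1: "xm1 \<in> A"
    and init_x0: "x 0 \<in> A" "\<forall>u\<in>A. grad xm1 \<bullet> x 0 \<le> grad xm1 \<bullet> u"
    and init_L0: "Lt 0 = ell f grad xm1 (x 0)"
    \<comment> \<open>iteration\<close>
    and vt: "\<And>t. v t \<in> A \<and> (\<forall>u\<in>A. grad (x t) \<bullet> v t \<le> grad (x t) \<bullet> u)"
    and gmax_pos: "\<And>t. gmax t > 0"
    and gam: "\<And>t. ereal (gam t) =
                 min (ereal (grad (x t) \<bullet> d t / (Lt t * (norm (d t))\<^sup>2))) (gmax t)"
    and xbar: "\<And>t. xb (Suc t) = x t - gam t *\<^sub>R d t"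
    and Lnext: "\<And>t. Lt (Suc t) = max (ell f grad (x t) (xb (Suc t))) (r t * Lt t)"
    and xnext: "\<And>t. x (Suc t) = (if f (xb (Suc t)) < f (x t) then xb (Suc t) else x t)"
    \<comment> \<open>Condition (D)\<close>
    and D1: "\<And>t. 0 < r t \<and> r t \<le> 1"
    and D2: "\<exists>p. (\<lambda>T. \<Prod>t<T. r t) \<longlonglongrightarrow> p \<and> 0 < p \<and> p \<le> 1"
    \<comment> \<open>Condition (S)\<close>
    and S1: "\<And>t. norm (d t) \<le> diameter A \<and>
                (\<forall>\<gamma>::real. 0 \<le> \<gamma> \<and> ereal \<gamma> \<le> gmax t \<longrightarrow> x t - \<gamma> *\<^sub>R d t \<in> X)"
    and S2: "infinite {t. gmax t \<ge> 1 \<or> ereal (gam t) < gmax t}"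
    and S3: "convex_on UNIV f \<Longrightarrow>
               \<exists>R\<ge>1. \<forall>t xs. (xs \<in> X \<and> (\<forall>y\<in>X. f xs \<le> f y)) \<longrightarrow>
                  grad (x t) \<bullet> d t \<ge> (f (x t) - f xs) / R"
    and eta: "eta > 1"
  shows "\<forall>t.
     (f (x (Suc t)) \<le> f (xb (Suc t)) \<and>
      f (xb (Suc t)) \<le> f (x t) - gam t * (grad (x t) \<bullet> d t)
                        + Lt (Suc t) / 2 * (gam t)\<^sup>2 * (norm (d t))\<^sup>2)
   \<and> (Lt (Suc t) \<le> eta * Lt t \<longrightarrow>
        f (x (Suc t)) \<le> f (x t) - (1 - eta / 2) * gam t * (grad (x t) \<bullet> d t))
   \<and> ((gmax t \<ge> 1 \<or> ereal (gam t) < gmax t) \<and> Lt (Suc t) \<le> eta * Lt t \<longrightarrow>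
        f (x (Suc t)) \<le> f (x t) - (1 - eta / 2)
           * min 1 (grad (x t) \<bullet> d t / (Lt t * (norm (d t))\<^sup>2)) * (grad (x t) \<bullet> d t))
   \<and> (convex_on UNIV f \<and> X = convex hull A \<longrightarrow>
        (\<forall>xs. xs \<in> X \<and> (\<forall>y\<in>X. f xs \<le> f y) \<longrightarrow>
           grad (x t) \<bullet> (x t - v t) \<ge> f (x t) - f xs))"
proof (intro allI)
  fix t
  have Lnn: "Lt k \<ge> 0" for k
  proof (induction k)
    case 0 then show ?case using init_L0 ell_nonneg by simp
  next
    case (Suc k) then show ?case using Lnext[of k] ell_nonneg[of f grad "x k" "xb (Suc k)"] by simp
  qed
  let ?g = "grad (x t) \<bullet> d t"
  let ?K = "Lt t * (norm (d t))\<^sup>2"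
  let ?N = "(gam t)\<^sup>2 * (norm (d t))\<^sup>2"
  have N0: "?N \<ge> 0" by simp
  have mono: "f (x (Suc t)) \<le> f (xb (Suc t))" "f (x (Suc t)) \<le> f (x t)"
    using xnext[of t] by auto
  have eb: "f (xb (Suc t)) - f (x t) + gam t * ?g \<le> ell f grad (x t) (xb (Suc t)) / 2 * ?N"
    using ell_bound[OF xbar[of t], of f grad] by (simp add: mult.assoc)
  have "ell f grad (x t) (xb (Suc t)) / 2 * ?N \<le> Lt (Suc t) / 2 * ?N"
    using Lnext[of t] N0 by (intro mult_right_mono) auto
  with eb have i2: "f (xb (Suc t)) \<le> f (x t) - gam t * ?g + Lt (Suc t) / 2 * (gam t)\<^sup>2 * (norm (d t))\<^sup>2"
    by (simp add: mult.assoc)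
  have gb: "?K * (gam t)\<^sup>2 \<le> gam t * ?g"
    using gam_bound[OF _ gmax_pos[of t] gam[of t]] Lnn[of t] by simp
  have ii: "f (x (Suc t)) \<le> f (x t) - (1 - eta / 2) * gam t * ?g" if I: "Lt (Suc t) \<le> eta * Lt t"
  proof -
    have "Lt (Suc t) / 2 * ?N \<le> eta * Lt t / 2 * ?N" using I N0 by (intro mult_right_mono) auto
    also have "\<dots> = eta / 2 * (?K * (gam t)\<^sup>2)" by (simp add: algebra_simps)
    also have "\<dots> \<le> eta / 2 * (gam t * ?g)" using gb eta by (intro mult_left_mono) auto
    finally have "Lt (Suc t) / 2 * ?N \<le> eta / 2 * (gam t * ?g)" .
    with i2 mono(1) have "f (x (Suc t)) \<le> f (x t) - gam t * ?g + eta / 2 * (gam t * ?g)"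
      by (simp add: mult.assoc)
    then show ?thesis by (simp add: algebra_simps)
  qed
  have iii: "f (x (Suc t)) \<le> f (x t) - (1 - eta / 2) * min 1 (?g / ?K) * ?g"
    if G: "gmax t \<ge> 1 \<or> ereal (gam t) < gmax t" and I: "Lt (Suc t) \<le> eta * Lt t"
  proof (cases "?K = 0")
    case True
    then have "min 1 (?g / ?K) = 0" by auto
    then show ?thesis using mono(2) by simp
  next
    case False
    then have Kp: "?K > 0" using Lnn[of t] by (simp add: order.not_eq_order_implies_strict)
    show ?thesis
    proof (cases "?g / ?K \<le> 1")
      case True
      have "gam t = ?g / ?K"
      proof (cases "ereal (?g / ?K) \<le> gmax t")
        case True
        then show ?thesis using gam[of t] by (simp add: min_def)
      next
        case F: False
        then have "ereal (gam t) = gmax t" using gam[of t] by (simp add: min_def)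
        moreover have "ereal (?g / ?K) \<le> 1" using True by simp
        moreover have "\<not> gmax t \<ge> 1" using F \<open>ereal (?g / ?K) \<le> 1\<close> order_trans by blast
        ultimately show ?thesis using G by simp
      qed
      then show ?thesis using ii[OF I] True by simp
    next
      case c1: False
      have gpos: "?g > 0" using c1 Kp by (smt (verit) divide_nonpos_pos)
      have "gam t \<ge> 1"
      proof -
        have "ereal (gam t) \<ge> 1"
          using G gam[of t] c1 by (auto simp: min_def split: if_splits)
        then show ?thesis by simp
      qed
      show ?thesis
      proof (cases "eta \<le> 2")
        case True
        have "(1 - eta / 2) * 1 * ?g \<le> (1 - eta / 2) * gam t * ?g"
          using True gpos \<open>gam t \<ge> 1\<close> by (intro mult_right_mono mult_left_mono) auto
        then show ?thesis using ii[OF I] c1 by simp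
      next
        case False
        then have "(1 - eta / 2) * min 1 (?g / ?K) * ?g \<le> 0" using c1 gpos
          by (intro mult_nonpos_nonneg mult_nonpos_nonneg) auto
        then show ?thesis using mono(2) by linarith
      qed
    qed
  qed
  have iv: "grad (x t) \<bullet> (x t - v t) \<ge> f (x t) - f xs"
    if cv: "convex_on UNIV f" and XA: "X = convex hull A" and xs: "xs \<in> X" for xs
  proof -
    have "f xs \<ge> f (x t) + grad (x t) \<bullet> (xs - x t)" by (rule grad_ineq[OF cv deriv])
    moreover have "grad (x t) \<bullet> v t \<le> grad (x t) \<bullet> xs"
    proof -
      have "convex hull A \<subseteq> {u. grad (x t) \<bullet> v t \<le> grad (x t) \<bullet> u}"
        using vt[of t] by (intro hull_minimal) (auto simp: convex_halfspace_ge)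
      then show ?thesis using xs XA by auto
    qed
    ultimately show ?thesis by (simp add: inner_diff_right)
  qed
  show "
     (f (x (Suc t)) \<le> f (xb (Suc t)) \<and>
      f (xb (Suc t)) \<le> f (x t) - gam t * (grad (x t) \<bullet> d t)
                        + Lt (Suc t) / 2 * (gam t)\<^sup>2 * (norm (d t))\<^sup>2)
   \<and> (Lt (Suc t) \<le> eta * Lt t \<longrightarrow>
        f (x (Suc t)) \<le> f (x t) - (1 - eta / 2) * gam t * (grad (x t) \<bullet> d t))
   \<and> ((gmax t \<ge> 1 \<or> ereal (gam t) < gmax t) \<and> Lt (Suc t) \<le> eta * Lt t \<longrightarrow>
        f (x (Suc t)) \<le> f (x t) - (1 - eta / 2)
           * min 1 (grad (x t) \<bullet> d t / (Lt t * (norm (d t))\<^sup>2)) * (grad (x t) \<bullet> d t))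
   \<and> (convex_on UNIV f \<and> X = convex hull A \<longrightarrow>
        (\<forall>xs. xs \<in> X \<and> (\<forall>y\<in>X. f xs \<le> f y) \<longrightarrow>
           grad (x t) \<bullet> (x t - v t) \<ge> f (x t) - f xs))" using mono i2 ii iii iv by blast
qed

end
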